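(* Let $\Xi:M_p\to M_q$ be an entanglement-breaking channel $\Xi(X)=\sum_{i=1}^l\mathrm{Tr}[XM_i]\sigma_i$, where $(M_i)_{i=1}^l$ is a POVM on $\mathbb C^p$ with $\|M_i\|_\infty=1$ for all $i$ and $\sigma_i\in D_q$, and let $\Psi:M_N\to M_k$ be any quantum channel. Then $$K_{\Xi\otimes\Psi}=K_\Xi\otimes K_\Psi,$$ where $K_{\Xi\otimes\Psi}=(\Xi\otimes\Psi)(D_{pN})$, $K_\Xi=\Xi(D_p)$, $K_\Psi=\Psi(D_N)$, and $K_\Xi\otimes K_\Psi$ denotes the smallest convex set containing all $X\otimes Y$ with $X\in K_\Xi$, $Y\in K_\Psi$.
   Context: A POVM is a family of positive semidefinite matrices summing to the identity; $D_d$ is the set of $d\times d$ density matrices; $\|\cdot\|_\infty$ is the operator norm. *)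

theory Defs
  imports "HOL-Analysis.Analysis"
begin

type_synonym 'n cmat = "complex^'n^'n"

definition msc :: "complex \<Rightarrow> ('n::finite) cmat \<Rightarrow> 'n cmat" where
  "msc c A = (\<chi> i j. c * A $ i $ j)"

definition psd :: "('n::finite) cmat \<Rightarrow> bool" where
  "psd A \<longleftrightarrow> (\<forall>v::complex^'n.
      let z = (\<Sum>i\<in>UNIV. cnj (v $ i) * (A *v v) $ i) in Im z = 0 \<and> Re z \<ge> 0)"

definition dens :: "('n::finite) cmat set" where
  "dens = {\<rho>. psd \<rho> \<and> trace \<rho> = 1}"

definition opnorm :: "('n::finite) cmat \<Rightarrow> real" where
  "opnorm A = onorm (\<lambda>v::complex^'n. A *v v)"

definition povm :: "nat \<Rightarrow> (nat \<Rightarrow> ('n::finite) cmat) \<Rightarrow> bool" where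
  "povm l M \<longleftrightarrow> (\<forall>t<l. psd (M t)) \<and> (\<Sum>t<l. M t) = mat 1"

text \<open>Kronecker product of matrices; index (a,b) corresponds to e_a \<otimes> e_b.\<close>
definition kron :: "('a::finite) cmat \<Rightarrow> ('b::finite) cmat \<Rightarrow> ('a \<times> 'b) cmat" where
  "kron A B = (\<chi> x y. A $ fst x $ fst y * B $ snd x $ snd y)"

definition munit :: "('n::finite) \<Rightarrow> 'n \<Rightarrow> 'n cmat" where
  "munit a b = (\<chi> i j. if i = a \<and> j = b then 1 else 0)"

definition clin :: "(('n::finite) cmat \<Rightarrow> ('m::finite) cmat) \<Rightarrow> bool" where
  "clin \<Phi> \<longleftrightarrow> (\<forall>A B. \<Phi> (A + B) = \<Phi> A + \<Phi> B) \<and> (\<forall>c A. \<Phi> (msc c A) = msc c (\<Phi> A))"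

text \<open>Matrices in M_k \<otimes> M_n for arbitrary k::nat, represented as functions on
  (nat \<times> 'n), where only first indices < k are relevant.\<close>
definition psd_ext :: "nat \<Rightarrow> (nat \<times> ('n::finite) \<Rightarrow> nat \<times> 'n \<Rightarrow> complex) \<Rightarrow> bool" where
  "psd_ext k X \<longleftrightarrow> (\<forall>v :: nat \<times> 'n \<Rightarrow> complex.
     let z = (\<Sum>x\<in>{..<k} \<times> UNIV. \<Sum>y\<in>{..<k} \<times> UNIV. cnj (v x) * X x y * v y)
     in Im z = 0 \<and> Re z \<ge> 0)"

text \<open>(id_k \<otimes> \<Phi>) applied blockwise.\<close>
definition ampl :: "(('n::finite) cmat \<Rightarrow> ('m::finite) cmat) \<Rightarrow>
    (nat \<times> 'n \<Rightarrow> nat \<times> 'n \<Rightarrow> complex) \<Rightarrow> (nat \<times> 'm \<Rightarrow> nat \<times> 'm \<Rightarrow> complex)" where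
  "ampl \<Phi> X = (\<lambda>(a,c) (a',c'). \<Phi> (\<chi> b b'. X (a,b) (a',b')) $ c $ c')"

definition cp :: "(('n::finite) cmat \<Rightarrow> ('m::finite) cmat) \<Rightarrow> bool" where
  "cp \<Phi> \<longleftrightarrow> (\<forall>k X. psd_ext k X \<longrightarrow> psd_ext k (ampl \<Phi> X))"

definition tp :: "(('n::finite) cmat \<Rightarrow> ('m::finite) cmat) \<Rightarrow> bool" where
  "tp \<Phi> \<longleftrightarrow> (\<forall>A. trace (\<Phi> A) = trace A)"

definition channel :: "(('n::finite) cmat \<Rightarrow> ('m::finite) cmat) \<Rightarrow> bool" where
  "channel \<Phi> \<longleftrightarrow> clin \<Phi> \<and> cp \<Phi> \<and> tp \<Phi>"

text \<open>Tensor product of linear maps, defined as the linear extension of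
  A \<otimes> B \<mapsto> \<Phi> A \<otimes> \<Psi> B via matrix units.\<close>
definition tensor_map :: "(('a::finite) cmat \<Rightarrow> ('c::finite) cmat) \<Rightarrow> (('b::finite) cmat \<Rightarrow> ('d::finite) cmat)
    \<Rightarrow> ('a \<times> 'b) cmat \<Rightarrow> ('c \<times> 'd) cmat" where
  "tensor_map \<Phi> \<Psi> X = (\<Sum>a\<in>UNIV. \<Sum>a'\<in>UNIV. \<Sum>b\<in>UNIV. \<Sum>b'\<in>UNIV.
      msc (X $ (a,b) $ (a',b')) (kron (\<Phi> (munit a a')) (\<Psi> (munit b b'))))"

definition tensor_set :: "('a::finite) cmat set \<Rightarrow> ('b::finite) cmat set \<Rightarrow> ('a \<times> 'b) cmat set" where
  "tensor_set K L = convex hull {kron X Y | X Y. X \<in> K \<and> Y \<in> L}"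

end

theory Submission
  imports Defs
begin


definition qf :: "('n::finite) cmat \<Rightarrow> complex^'n \<Rightarrow> complex^'n \<Rightarrow> complex" where
  "qf A u v = (\<Sum>i\<in>UNIV. \<Sum>j\<in>UNIV. cnj (u$i) * A$i$j * v$j)"

lemma psd_qf: "psd A \<longleftrightarrow> (\<forall>v. Im (qf A v v) = 0 \<and> Re (qf A v v) \<ge> 0)"
  unfolding psd_def qf_def matrix_vector_mult_def Let_def
  by (simp add: sum_distrib_left mult.assoc)

lemma qf_add_left: "qf A (u + u') v = qf A u v + qf A u' v"
  unfolding qf_def by (simp add: algebra_simps sum.distrib)
lemma qf_add_right: "qf A u (v + v') = qf A u v + qf A u v'"
  unfolding qf_def by (simp add: algebra_simps sum.distrib)
lemma qf_scale_left: "qf A (c *s u) v = cnj c * qf A u v"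
  unfolding qf_def by (simp add: algebra_simps sum_distrib_left)
lemma qf_scale_right: "qf A u (c *s v) = c * qf A u v"
  unfolding qf_def by (simp add: algebra_simps sum_distrib_left)
lemma sum_if_right: "(\<Sum>m\<in>(UNIV::'n::finite set). f m * (if m = j then b else 0)) = f j * (b::complex)"
proof -
  have "(\<Sum>m\<in>(UNIV::'n set). f m * (if m = j then b else 0)) = (\<Sum>m\<in>UNIV. if m = j then f m * b else 0)"
    by (rule sum.cong) auto
  then show ?thesis by simp
qed

lemma sum_if_left: "(\<Sum>m\<in>(UNIV::'n::finite set). (if m = j then b else 0) * f m) = (b::complex) * f j"
  using sum_if_right[of "f" j b] by (simp add: mult.commute)

lemma qf_axis: "qf A (axis i a) (axis j b) = cnj a * A$i$j * b"
proof -
  have "qf A (axis i a) (axis j b) = (\<Sum>k\<in>UNIV. (if k = i then cnj a else 0) * (\<Sum>m\<in>UNIV. A$k$m * (if m = j then b else 0)))"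
    unfolding qf_def axis_def by (intro sum.cong refl) (auto simp: sum_distrib_left mult.assoc)
  then show ?thesis by (simp only: sum_if_left sum_if_right) (simp add: mult.assoc)
qed

lemma psd_diag: "psd A \<Longrightarrow> Im (A$i$i) = 0 \<and> Re (A$i$i) \<ge> 0"
  using qf_axis[of A i 1 i 1] unfolding psd_qf by (metis complex_cnj_one mult_1 mult_1_right)

lemma herm:
  assumes "psd A" shows "A$j$i = cnj (A$i$j)"
proof -
  have e: "qf A (axis i 1 + c *s axis j 1) (axis i 1 + c *s axis j 1)
      = A$i$i + c * A$i$j + cnj c * A$j$i + cnj c * c * A$j$j" for c
    by (simp add: qf_add_left qf_add_right qf_scale_left qf_scale_right qf_axis algebra_simps)
  have r: "Im (A$i$i + c * A$i$j + cnj c * A$j$i + cnj c * c * A$j$j) = 0" for c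
    using assms unfolding psd_qf by (metis e)
  have d1: "Im (A$i$i) = 0" "Im (A$j$j) = 0" using psd_diag[OF assms] by auto
  from r[of 1] d1 have 1: "Im (A$i$j) + Im (A$j$i) = 0" by simp
  from r[of \<i>] d1 have 2: "Re (A$i$j) - Re (A$j$i) = 0" by (simp add: algebra_simps)
  show ?thesis using 1 2 by (simp add: complex_eq_iff)
qed

lemma cnj_herm: "psd A \<Longrightarrow> cnj (A$i$j) = A$j$i"
  using herm by metis

lemma qf_herm: assumes "psd A" shows "qf A v u = cnj (qf A u v)"
proof -
  have "cnj (qf A u v) = (\<Sum>i\<in>UNIV. \<Sum>j\<in>UNIV. u$i * A$j$i * cnj (v$j))"
    by (simp add: qf_def cnj_sum cnj_herm[OF assms])
  also have "\<dots> = (\<Sum>j\<in>UNIV. \<Sum>i\<in>UNIV. u$i * A$j$i * cnj (v$j))"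
    by (rule sum.swap)
  also have "\<dots> = qf A v u"
    unfolding qf_def by (intro sum.cong refl) (simp add: mult.commute mult.left_commute)
  finally show ?thesis by simp
qed

lemma CS:
  assumes "psd A"
  shows "(cmod (qf A u v))^2 \<le> Re (qf A u u) * Re (qf A v v)"
proof -
  define b where "b = qf A u v"
  define P where "P = Re (qf A u u)"
  define Q where "Q = Re (qf A v v)"
  have hb: "qf A v u = cnj b" using qf_herm[OF assms, where v=v and u=u] b_def by simp
  have key: "0 \<le> P - 2 * t * (cmod b)^2 + t^2 * (cmod b)^2 * Q" for t :: real
  proof -
    define s where "s = - (complex_of_real t * cnj b)"
    have nb: "b * cnj b = (complex_of_real (cmod b))^2" using complex_norm_square[of b] by simp
    have 1: "s * b = - complex_of_real (t * (cmod b)^2)" unfolding s_def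
      by (simp add: nb[symmetric] mult.commute mult.left_commute)
    have 2: "cnj s * cnj b = - complex_of_real (t * (cmod b)^2)" unfolding s_def
      by (simp add: nb[symmetric] mult.commute mult.left_commute)
    have 30: "cnj s * s = (complex_of_real t)^2 * (b * cnj b)" unfolding s_def
      by (simp add: power2_eq_square mult_ac)
    have 3: "cnj s * s = complex_of_real (t^2 * (cmod b)^2)" unfolding 30 nb by simp
    have e: "qf A (u + s *s v) (u + s *s v) = qf A u u + s * b + cnj s * cnj b + cnj s * s * qf A v v"
      by (simp add: qf_add_left qf_add_right qf_scale_left qf_scale_right hb b_def[symmetric] algebra_simps)
    have "Re (qf A (u + s *s v) (u + s *s v)) \<ge> 0" using assms psd_qf by blast
    then have "0 \<le> Re (qf A u u + s * b + cnj s * cnj b + cnj s * s * qf A v v)" using e by simp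
    also have "\<dots> = P - 2 * t * (cmod b)^2 + t^2 * (cmod b)^2 * Q"
      unfolding 1 2 3 P_def Q_def by simp
    finally show ?thesis .
  qed
  have P0: "P \<ge> 0" "Q \<ge> 0" using assms psd_qf P_def Q_def by auto
  show ?thesis
  proof (cases "Q = 0")
    case True
    show ?thesis
    proof (cases "b = 0")
      case True then show ?thesis using P0 by (simp add: b_def P_def[symmetric] Q_def[symmetric])
    next
      case False
      then have "(cmod b)^2 > 0" by simp
      with key[of "(P+1)/(2*(cmod b)^2)"] \<open>Q = 0\<close> show ?thesis by simp
    qed
  next
    case False
    with P0 have "Q > 0" by simp
    from key[of "1/Q"] have "0 \<le> P - (cmod b)^2 / Q" using \<open>Q>0\<close>
      by (simp add: power2_eq_square field_simps)
    then show ?thesis using \<open>Q>0\<close> by (simp add: b_def P_def Q_def field_simps)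
  qed
qed



lemma qf_add_mat: "qf (A + B) u v = qf A u v + qf B u v"
  unfolding qf_def by (simp add: algebra_simps sum.distrib)
lemma qf_diff_mat: "qf (A - B) u v = qf A u v - qf B u v"
  unfolding qf_def by (simp add: algebra_simps sum_subtractf)
lemma qf_zero_mat[simp]: "qf 0 u v = 0" unfolding qf_def by simp
lemma qf_sum_mat: "qf (\<Sum>k\<in>S. A k) u v = (\<Sum>k\<in>S. qf (A k) u v)"
  by (induction S rule: infinite_finite_induct) (auto simp: qf_add_mat)

lemma qf_axis_right: "qf A w (axis i 1) = (\<Sum>a\<in>UNIV. cnj (w$a) * A$a$i)"
  unfolding qf_def axis_def
  by (intro sum.cong refl) (simp add: sum_if_right[of "\<lambda>m. cnj (w$_) * A$_$m", simplified])

lemma psd_zero_row: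
  assumes "psd A" "A$i$i = 0" shows "A$i$j = 0" "A$j$i = 0"
proof -
  have "(cmod (A$i$j))^2 \<le> Re (A$i$i) * Re (A$j$j)"
    using CS[OF assms(1), of "axis i 1" "axis j 1"] by (simp add: qf_axis)
  then show "A$i$j = 0" using assms(2) by simp
  then show "A$j$i = 0" using herm[OF assms(1), of i j] by simp
qed

definition outer :: "complex^'n \<Rightarrow> ('n::finite) cmat" where
  "outer x = (\<chi> a b. x$a * cnj (x$b))"

lemma qf_outer: "qf (outer x) u v = (\<Sum>a\<in>UNIV. cnj (u$a) * x$a) * (\<Sum>b\<in>UNIV. cnj (x$b) * v$b)"
  unfolding qf_def outer_def sum_product by (intro sum.cong refl) (simp add: mult_ac)

lemma psd_outer: "psd (outer x)"
  unfolding psd_qf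
proof
  fix w
  define z where "z = (\<Sum>a\<in>UNIV. cnj (w$a) * x$a)"
  have "qf (outer x) w w = z * cnj z"
    unfolding qf_outer z_def by (simp add: cnj_sum mult.commute)
  also have "\<dots> = complex_of_real ((cmod z)^2)" by (rule complex_norm_square[symmetric])
  finally have e: "qf (outer x) w w = complex_of_real ((cmod z)^2)" .
  show "Im (qf (outer x) w w) = 0 \<and> 0 \<le> Re (qf (outer x) w w)"
    unfolding e Im_complex_of_real Re_complex_of_real by simp
qed

lemma outer_zero[simp]: "outer 0 = 0"
  unfolding outer_def by (simp add: vec_eq_iff)

lemma psd_add: "psd A \<Longrightarrow> psd B \<Longrightarrow> psd (A + B)"
  unfolding psd_qf qf_add_mat by simp

lemma psd_zero: "psd 0" unfolding psd_qf by simp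

lemma psd_sum: "(\<And>k. k \<in> S \<Longrightarrow> psd (A k)) \<Longrightarrow> psd (\<Sum>k\<in>S. A k)"
  by (induction S rule: infinite_finite_induct) (auto simp: psd_zero psd_add)

lemma decomp_aux:
  fixes S :: "'n::finite set"
  assumes "finite S"
  shows "\<forall>A::'n cmat. psd A \<and> (\<forall>i j. A$i$j \<noteq> 0 \<longrightarrow> i \<in> S \<and> j \<in> S) \<longrightarrow> (\<exists>x. A = (\<Sum>k\<in>S. outer (x k)))"
  using assms
proof (induction S rule: finite_induct)
  case empty
  show ?case
  proof (intro allI impI)
    fix A :: "'n cmat" assume "psd A \<and> (\<forall>i j. A$i$j \<noteq> 0 \<longrightarrow> i \<in> {} \<and> j \<in> {})"
    then have "A = 0" by (auto simp: vec_eq_iff)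
    then show "\<exists>x. A = (\<Sum>k\<in>{}. outer (x k))" by simp
  qed
next
  case (insert i S)
  show ?case
  proof (intro allI impI)
    fix A :: "'n cmat" assume H: "psd A \<and> (\<forall>a b. A$a$b \<noteq> 0 \<longrightarrow> a \<in> insert i S \<and> b \<in> insert i S)"
    then have pA: "psd A" and sA: "\<And>a b. A$a$b \<noteq> 0 \<Longrightarrow> a \<in> insert i S \<and> b \<in> insert i S" by auto
    show "\<exists>x. A = (\<Sum>k\<in>insert i S. outer (x k))"
    proof (cases "A$i$i = 0")
      case True
      have "\<forall>a b. A$a$b \<noteq> 0 \<longrightarrow> a \<in> S \<and> b \<in> S"
        using sA psd_zero_row[OF pA True] by blast
      with insert.IH pA obtain x where x: "A = (\<Sum>k\<in>S. outer (x k))" by blast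
      have "(\<Sum>k\<in>insert i S. outer ((x(i:=0)) k)) = (\<Sum>k\<in>S. outer ((x(i:=0)) k))"
        using insert.hyps by simp
      also have "\<dots> = (\<Sum>k\<in>S. outer (x k))"
        using insert.hyps by (intro sum.cong) auto
      finally show ?thesis using x by metis
    next
      case False
      define d where "d = Re (A$i$i)"
      have Aii: "A$i$i = complex_of_real d" using psd_diag[OF pA, of i] d_def by (simp add: complex_eq_iff)
      have "d \<ge> 0" using psd_diag[OF pA, of i] d_def by simp
      with False Aii have dpos: "d > 0" by (cases "d = 0") auto
      define y :: "complex^'n" where "y = (\<chi> a. A$a$i / complex_of_real (sqrt d))"
      have sq: "complex_of_real (sqrt d) * complex_of_real (sqrt d) = complex_of_real d"
        using dpos by (simp flip: of_real_mult)
      have oy: "outer y $ a $ b = A$a$i * A$i$b / complex_of_real d" for a b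
        unfolding outer_def y_def using cnj_herm[OF pA, of b i]
        by (simp add: sq[symmetric])
      define A' where "A' = A - outer y"
      have rowi: "A'$i$b = 0" "A'$b$i = 0" for b
        unfolding A'_def using oy dpos Aii by auto
      have supp: "\<forall>a b. A'$a$b \<noteq> 0 \<longrightarrow> a \<in> S \<and> b \<in> S"
      proof (intro allI impI)
        fix a b assume nz: "A'$a$b \<noteq> 0"
        then have "a \<noteq> i" "b \<noteq> i" using rowi by auto
        moreover have "a \<in> insert i S \<and> b \<in> insert i S"
        proof (rule ccontr)
          assume "\<not> (a \<in> insert i S \<and> b \<in> insert i S)"
          then have "A$a$b = 0" "A$a$i = 0 \<or> A$i$b = 0" using sA by blast+
          then show False using nz unfolding A'_def using oy by auto
        qed
        ultimately show "a \<in> S \<and> b \<in> S" by auto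
      qed
      have pA': "psd A'"
        unfolding psd_qf
      proof
        fix w
        have qy: "qf (outer y) w w = complex_of_real ((cmod (qf A w (axis i 1)))^2 / d)"
        proof -
          have z: "(\<Sum>a\<in>UNIV. cnj (w$a) * y$a) = qf A w (axis i 1) / complex_of_real (sqrt d)"
            unfolding y_def qf_axis_right by (simp add: sum_divide_distrib)
          have "qf (outer y) w w = (\<Sum>a\<in>UNIV. cnj (w$a) * y$a) * cnj (\<Sum>a\<in>UNIV. cnj (w$a) * y$a)"
            unfolding qf_outer by (simp add: cnj_sum mult.commute)
          also have "\<dots> = (qf A w (axis i 1) * cnj (qf A w (axis i 1))) / complex_of_real d"
            unfolding z using sq by simp
          also have "\<dots> = complex_of_real ((cmod (qf A w (axis i 1)))^2 / d)"
            by (simp add: complex_norm_square[symmetric])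
          finally show ?thesis .
        qed
        have cs: "(cmod (qf A w (axis i 1)))^2 \<le> Re (qf A w w) * d"
          using CS[OF pA, of w "axis i 1"] by (simp add: qf_axis d_def)
        have "(cmod (qf A w (axis i 1)))^2 / d \<le> Re (qf A w w)"
          using cs dpos by (simp add: divide_le_eq)
        moreover have "Im (qf A w w) = 0" using pA psd_qf by blast
        ultimately show "Im (qf A' w w) = 0 \<and> 0 \<le> Re (qf A' w w)"
          unfolding A'_def qf_diff_mat qy by simp
      qed
      from insert.IH pA' supp obtain x where x: "A' = (\<Sum>k\<in>S. outer (x k))" by blast
      have "(\<Sum>k\<in>insert i S. outer ((x(i:=y)) k)) = outer y + (\<Sum>k\<in>S. outer ((x(i:=y)) k))"
        using insert.hyps by simp
      also have "(\<Sum>k\<in>S. outer ((x(i:=y)) k)) = (\<Sum>k\<in>S. outer (x k))"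
        using insert.hyps by (intro sum.cong) auto
      finally have "(\<Sum>k\<in>insert i S. outer ((x(i:=y)) k)) = A"
        using x A'_def by (metis add.commute diff_add_cancel)
      then show ?thesis by metis
    qed
  qed
qed

lemma decomp:
  fixes A :: "('n::finite) cmat"
  assumes "psd A" shows "\<exists>x. A = (\<Sum>k\<in>(UNIV::'n set). outer (x k))"
proof -
  show ?thesis using decomp_aux[of "UNIV::'n set", THEN spec, of A] assms by simp
qed



lemma sum_UNIV_prod: "(\<Sum>p\<in>(UNIV::('a::finite\<times>'b::finite) set). f p) = (\<Sum>a\<in>UNIV. \<Sum>b\<in>UNIV. f (a,b))"
  by (simp add: sum.cartesian_product)

lemma msc_comp[simp]: "msc c A $ i $ j = c * A$i$j" unfolding msc_def by simp
lemma msc_add_left: "msc (a+b) A = msc a A + msc b A" by (simp add: vec_eq_iff algebra_simps)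
lemma msc_add_right: "msc a (A+B) = msc a A + msc a B" by (simp add: vec_eq_iff algebra_simps)
lemma msc_zero_left[simp]: "msc 0 A = 0" by (simp add: vec_eq_iff)
lemma msc_zero_right[simp]: "msc a 0 = 0" by (simp add: vec_eq_iff)
lemma msc_one[simp]: "msc 1 A = A" by (simp add: vec_eq_iff)
lemma msc_mult: "msc a (msc b A) = msc (a*b) A" by (simp add: vec_eq_iff algebra_simps)
lemma scaleR_cplx: "u *\<^sub>R (z::complex) = complex_of_real u * z" by (rule scaleR_conv_of_real)
lemma msc_of_real: "msc (complex_of_real u) A = u *\<^sub>R A" by (simp add: vec_eq_iff scaleR_cplx)
lemma msc_sum_left: "msc (\<Sum>k\<in>S. f k) A = (\<Sum>k\<in>S. msc (f k) A)"
  by (simp add: vec_eq_iff sum_distrib_right)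
lemma msc_sum_right: "msc a (\<Sum>k\<in>S. A k) = (\<Sum>k\<in>S. msc a (A k))"
  by (simp add: vec_eq_iff sum_distrib_left)

lemma kron_comp[simp]: "kron A B $ x $ y = A$fst x$fst y * B$snd x$snd y" unfolding kron_def by simp
lemma kron_sum_left: "kron (\<Sum>k\<in>S. A k) B = (\<Sum>k\<in>S. kron (A k) B)"
  by (simp add: vec_eq_iff sum_distrib_right)
lemma kron_sum_right: "kron A (\<Sum>k\<in>S. B k) = (\<Sum>k\<in>S. kron A (B k))"
  by (simp add: vec_eq_iff sum_distrib_left)
lemma kron_msc_left: "kron (msc c A) B = msc c (kron A B)" by (simp add: vec_eq_iff mult_ac)
lemma kron_msc_right: "kron A (msc c B) = msc c (kron A B)" by (simp add: vec_eq_iff mult_ac)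
lemma kron_zero_right[simp]: "kron A 0 = 0" by (simp add: vec_eq_iff)

definition vkron :: "complex^'a \<Rightarrow> complex^'b \<Rightarrow> complex^('a::finite \<times> 'b::finite)" where
  "vkron x y = (\<chi> p. x$fst p * y$snd p)"

lemma kron_outer: "kron (outer x) (outer y) = outer (vkron x y)"
  by (simp add: vec_eq_iff outer_def vkron_def mult_ac)

lemma psd_kron: fixes A :: "('a::finite) cmat" and B :: "('b::finite) cmat"
  assumes "psd A" "psd B" shows "psd (kron A B)"
proof -
  obtain x where x: "A = (\<Sum>k\<in>(UNIV::'a set). outer (x k))" using decomp[OF assms(1)] by blast
  obtain y where y: "B = (\<Sum>k\<in>(UNIV::'b set). outer (y k))" using decomp[OF assms(2)] by blast
  have "kron A B = (\<Sum>m\<in>UNIV. \<Sum>k\<in>UNIV. outer (vkron (x k) (y m)))"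
    unfolding x y kron_sum_left kron_sum_right kron_outer ..
  then show ?thesis by (simp add: psd_sum psd_outer)
qed

lemma trace_kron: "trace (kron A B) = trace A * trace B"
  unfolding trace_def by (simp add: sum_UNIV_prod sum_product)

lemma trace_add: "trace (A + B) = trace A + trace B"
  unfolding trace_def by (simp add: sum.distrib)
lemma trace_scaleR: "trace (u *\<^sub>R A) = complex_of_real u * trace A"
  unfolding trace_def by (simp add: scaleR_cplx sum_distrib_left)
lemma trace_msc: "trace (msc c A) = c * trace A"
  unfolding trace_def by (simp add: sum_distrib_left)

lemma qf_scaleR: "qf (u *\<^sub>R A) v w = complex_of_real u * qf A v w"
  unfolding qf_def by (simp add: scaleR_cplx sum_distrib_left mult_ac)

lemma psd_scaleR: "psd A \<Longrightarrow> u \<ge> 0 \<Longrightarrow> psd (u *\<^sub>R A)"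
  unfolding psd_qf qf_scaleR by simp

lemma dens_kron: "\<rho> \<in> dens \<Longrightarrow> \<tau> \<in> dens \<Longrightarrow> kron \<rho> \<tau> \<in> dens"
  unfolding dens_def by (simp add: psd_kron trace_kron)

lemma convex_dens: "convex dens"
  unfolding convex_def
proof (intro allI impI ballI)
  fix x y :: "'n::finite cmat" and u v :: real
  assume "x \<in> dens" "y \<in> dens" "0 \<le> u" "0 \<le> v" "u + v = 1"
  then show "u *\<^sub>R x + v *\<^sub>R y \<in> dens" unfolding dens_def
    by (simp add: psd_add psd_scaleR trace_add trace_scaleR flip: of_real_add)
qed

lemma clin_zero: "clin \<Phi> \<Longrightarrow> \<Phi> 0 = 0"
  unfolding clin_def by (metis add.right_neutral add_left_cancel)
lemma clin_sum: "clin \<Phi> \<Longrightarrow> \<Phi> (\<Sum>k\<in>S. A k) = (\<Sum>k\<in>S. \<Phi> (A k))"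
  by (induction S rule: infinite_finite_induct) (auto simp: clin_zero, simp add: clin_def)
lemma clin_msc: "clin \<Phi> \<Longrightarrow> \<Phi> (msc c A) = msc c (\<Phi> A)"
  unfolding clin_def by blast
lemma clin_scaleR: "clin \<Phi> \<Longrightarrow> \<Phi> (u *\<^sub>R A) = u *\<^sub>R (\<Phi> A)"
  using clin_msc[of \<Phi> "complex_of_real u" A] by (simp add: msc_of_real)
lemma clin_add: "clin \<Phi> \<Longrightarrow> \<Phi> (A + B) = \<Phi> A + \<Phi> B"
  unfolding clin_def by blast

lemma munit_comp[simp]: "munit a b $ i $ j = (if i = a \<and> j = b then 1 else 0)"
  unfolding munit_def by simp

lemma mat_expand: "A = (\<Sum>a\<in>UNIV. \<Sum>a'\<in>UNIV. msc (A$a$a') (munit a a'))"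
proof -
  have "(\<Sum>a\<in>UNIV. \<Sum>a'\<in>UNIV. A$a$a' * (if i = a \<and> j = a' then 1 else 0)) = A$i$j" for i j
  proof -
    have eq: "\<And>a a'. A$a$a' * (if i = a \<and> j = a' then 1 else 0) = (if a' = j then (if a = i then A$i$j else 0) else 0)"
      by auto
    show ?thesis by (simp only: eq) simp
  qed
  then show ?thesis by (simp add: vec_eq_iff)
qed

lemma clin_expand: "clin \<Phi> \<Longrightarrow> \<Phi> A = (\<Sum>a\<in>UNIV. \<Sum>a'\<in>UNIV. msc (A$a$a') (\<Phi> (munit a a')))"
  by (subst mat_expand) (simp add: clin_sum clin_msc)

lemma tensor_map_kron:
  assumes "clin \<Phi>" "clin \<Psi>"
  shows "tensor_map \<Phi> \<Psi> (kron A B) = kron (\<Phi> A) (\<Psi> B)"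
proof -
  have "kron (\<Phi> A) (\<Psi> B) = (\<Sum>a\<in>UNIV. \<Sum>a'\<in>UNIV. \<Sum>b\<in>UNIV. \<Sum>b'\<in>UNIV.
      msc (A$a$a' * B$b$b') (kron (\<Phi> (munit a a')) (\<Psi> (munit b b'))))"
    unfolding clin_expand[OF assms(1), of A] clin_expand[OF assms(2), of B]
    by (simp only: kron_sum_left, simp only: kron_sum_right, simp only: kron_msc_left kron_msc_right msc_mult mult.commute)
  then show ?thesis unfolding tensor_map_def by (simp only: kron_comp fst_conv snd_conv)
qed

lemma tensor_map_add: "tensor_map \<Phi> \<Psi> (X + Y) = tensor_map \<Phi> \<Psi> X + tensor_map \<Phi> \<Psi> Y"
  unfolding tensor_map_def by (simp add: msc_add_left sum.distrib)
lemma tensor_map_scaleR: "tensor_map \<Phi> \<Psi> (u *\<^sub>R X) = u *\<^sub>R tensor_map \<Phi> \<Psi> X"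
  unfolding tensor_map_def
  by (simp add: msc_sum_right msc_mult flip: msc_of_real)

lemma convex_image_tm: "convex (tensor_map \<Phi> \<Psi> ` dens)"
  unfolding convex_def
proof (intro allI impI ballI)
  fix x y and u v :: real
  assume "x \<in> tensor_map \<Phi> \<Psi> ` dens" "y \<in> tensor_map \<Phi> \<Psi> ` dens" "0 \<le> u" "0 \<le> v" "u + v = 1"
  then obtain x' y' where "x' \<in> dens" "y' \<in> dens" "x = tensor_map \<Phi> \<Psi> x'" "y = tensor_map \<Phi> \<Psi> y'" by auto
  moreover have "u *\<^sub>R x' + v *\<^sub>R y' \<in> dens" using convex_dens \<open>x' \<in> dens\<close> \<open>y' \<in> dens\<close> \<open>0 \<le> u\<close> \<open>0 \<le> v\<close> \<open>u+v=1\<close>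
    unfolding convex_def by blast
  moreover have "u *\<^sub>R x + v *\<^sub>R y = tensor_map \<Phi> \<Psi> (u *\<^sub>R x' + v *\<^sub>R y')" if "x = tensor_map \<Phi> \<Psi> x'" "y = tensor_map \<Phi> \<Psi> y'"
    using that by (simp only: tensor_map_add tensor_map_scaleR)
  ultimately show "u *\<^sub>R x + v *\<^sub>R y \<in> tensor_map \<Phi> \<Psi> ` dens"
    by blast
qed



definition ptr :: "('a::finite) cmat \<Rightarrow> ('a \<times> 'b::finite) cmat \<Rightarrow> 'b cmat" where
  "ptr M \<rho> = (\<chi> b b'. \<Sum>a\<in>UNIV. \<Sum>a'\<in>UNIV. \<rho>$(a,b)$(a',b') * M$a'$a)"

lemma ptr_add: "ptr (A + B) \<rho> = ptr A \<rho> + ptr B \<rho>"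
  unfolding ptr_def by (simp add: vec_eq_iff algebra_simps sum.distrib)
lemma ptr_zero: "ptr 0 \<rho> = 0"
  unfolding ptr_def by (simp add: vec_eq_iff)
lemma ptr_sum: "ptr (\<Sum>k\<in>S. A k) \<rho> = (\<Sum>k\<in>S. ptr (A k) \<rho>)"
  by (induction S rule: infinite_finite_induct) (auto simp: ptr_add ptr_zero)

lemma qf_ptr_outer: "qf (ptr (outer x) \<rho>) u u = qf \<rho> (vkron x u) (vkron x u)"
proof -
  define T where "T a b a' b' = cnj (x$a) * cnj (u$b) * \<rho>$(a,b)$(a',b') * x$a' * u$b'" for a b a' b'
  have 1: "qf (ptr (outer x) \<rho>) u u = (\<Sum>b\<in>UNIV. \<Sum>b'\<in>UNIV. \<Sum>a\<in>UNIV. \<Sum>a'\<in>UNIV. T a b a' b')"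
    unfolding qf_def ptr_def T_def outer_def by (simp add: sum_distrib_left sum_distrib_right mult_ac)
  also have "\<dots> = (\<Sum>b\<in>UNIV. \<Sum>a\<in>UNIV. \<Sum>b'\<in>UNIV. \<Sum>a'\<in>UNIV. T a b a' b')"
    by (rule sum.cong[OF refl], rule sum.swap)
  also have "\<dots> = (\<Sum>b\<in>UNIV. \<Sum>a\<in>UNIV. \<Sum>a'\<in>UNIV. \<Sum>b'\<in>UNIV. T a b a' b')"
    by (rule sum.cong[OF refl], rule sum.cong[OF refl], rule sum.swap)
  also have "\<dots> = (\<Sum>a\<in>UNIV. \<Sum>b\<in>UNIV. \<Sum>a'\<in>UNIV. \<Sum>b'\<in>UNIV. T a b a' b')"
    by (rule sum.swap)
  also have "\<dots> = qf \<rho> (vkron x u) (vkron x u)"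
    unfolding qf_def vkron_def T_def sum_UNIV_prod by (simp add: sum_distrib_left sum_distrib_right mult_ac)
  finally show ?thesis .
qed

lemma psd_ptr:
  fixes M :: "('a::finite) cmat" and \<rho> :: "('a \<times> 'b::finite) cmat"
  assumes "psd M" "psd \<rho>" shows "psd (ptr M \<rho>)"
proof -
  obtain x where x: "M = (\<Sum>k\<in>(UNIV::'a set). outer (x k))" using decomp[OF assms(1)] by blast
  have "psd (ptr (outer (x k)) \<rho>)" for k
    using assms(2) unfolding psd_qf qf_ptr_outer by blast
  then show ?thesis unfolding x ptr_sum by (simp add: psd_sum)
qed

lemma trace_zero: "trace 0 = 0" by (simp add: trace_def)
lemma trace_sum: "trace (\<Sum>k\<in>S. A k) = (\<Sum>k\<in>S. trace (A k))"
  by (induction S rule: infinite_finite_induct) (auto simp: trace_add trace_zero)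

lemma mat1_comp: "(mat 1 :: ('n::finite) cmat) $ i $ j = (if i = j then 1 else 0)"
  by (simp add: mat_def)

lemma trace_ptr_one: "trace (ptr (mat 1) \<rho>) = trace \<rho>"
proof -
  have e: "ptr (mat 1) \<rho> $ b $ b = (\<Sum>a\<in>UNIV. \<rho>$(a,b)$(a,b))" for b
  proof -
    have "\<And>a a'. \<rho>$(a,b)$(a',b) * (mat 1::_ cmat)$a'$a = (if a' = a then \<rho>$(a,b)$(a,b) else 0)"
      by (simp add: mat1_comp)
    then show ?thesis unfolding ptr_def by simp
  qed
  show ?thesis unfolding trace_def e sum_UNIV_prod by (rule sum.swap)
qed

lemma psd_trace0:
  assumes "psd T" "trace T = 0" shows "T = 0"
proof -
  have d: "Im (T$i$i) = 0 \<and> Re (T$i$i) \<ge> 0" for i using psd_diag[OF assms(1)] by blast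
  have "(\<Sum>i\<in>UNIV. Re (T$i$i)) = 0" using assms(2) unfolding trace_def
    by (metis Re_sum zero_complex.sel(1))
  then have "Re (T$i$i) = 0" for i using d sum_nonneg_eq_0_iff[of UNIV "\<lambda>i. Re (T$i$i)"] by simp
  then have z: "T$i$i = 0" for i using d by (simp add: complex_eq_iff)
  have "T$i$j = 0" for i j using psd_zero_row(1)[OF assms(1) z[of i]] .
  then show ?thesis by (simp add: vec_eq_iff)
qed

lemma psd_trace_nonneg: assumes "psd T" shows "Im (trace T) = 0 \<and> Re (trace T) \<ge> 0"
proof -
  have a: "\<And>i. Im (T$i$i) = 0" and b: "\<And>i. Re (T$i$i) \<ge> 0" using psd_diag[OF assms] by blast+
  have "Im (trace T) = (\<Sum>i\<in>UNIV. Im (T$i$i))" "Re (trace T) = (\<Sum>i\<in>UNIV. Re (T$i$i))"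
    unfolding trace_def by simp_all
  then show ?thesis using a b by (simp add: sum_nonneg)
qed



lemma mmult_comp: "(A ** B) $ i $ j = (\<Sum>k\<in>UNIV. A$i$k * B$k$j)"
  by (simp add: matrix_matrix_mult_def)

lemma trace_munit: "trace (munit a a' ** M) = M$a'$a"
proof -
  have eq: "\<And>i k. (if i = a \<and> k = a' then 1 else 0) * M$k$i = (if k = a' then (if i = a then M$a'$a else 0) else 0)"
    by auto
  show ?thesis unfolding trace_def mmult_comp munit_comp by (simp only: eq) simp
qed

lemma clin_Xi:
  fixes M :: "nat \<Rightarrow> ('p::finite) cmat" and \<sigma> :: "nat \<Rightarrow> ('q::finite) cmat"
  assumes "\<forall>X. Xi X = (\<Sum>t<l. msc (trace (X ** M t)) (\<sigma> t))"
  shows "clin Xi"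
proof -
  have a: "trace ((A + B) ** C) = trace (A ** C) + trace (B ** C)" for A B C :: "'p cmat"
    unfolding trace_def mmult_comp by (simp add: algebra_simps sum.distrib)
  have m: "trace (msc c A ** C) = c * trace (A ** C)" for c A and C :: "'p cmat"
    unfolding trace_def mmult_comp by (simp add: sum_distrib_left mult_ac)
  show ?thesis unfolding clin_def assms[rule_format] a m
    by (simp add: msc_add_left sum.distrib msc_sum_right msc_mult)
qed

definition blk :: "'a \<Rightarrow> 'a \<Rightarrow> ('a::finite \<times> 'b::finite) cmat \<Rightarrow> 'b cmat" where
  "blk a a' \<rho> = (\<chi> b b'. \<rho>$(a,b)$(a',b'))"

lemma ptr_blk: "ptr M \<rho> = (\<Sum>a\<in>UNIV. \<Sum>a'\<in>UNIV. msc (M$a'$a) (blk a a' \<rho>))"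
  unfolding ptr_def blk_def by (simp add: vec_eq_iff mult.commute)

lemma tensor_map_povm:
  fixes M :: "nat \<Rightarrow> ('p::finite) cmat" and \<sigma> :: "nat \<Rightarrow> ('q::finite) cmat"
    and Psi :: "('N::finite) cmat \<Rightarrow> ('k::finite) cmat"
  assumes X: "\<forall>X. Xi X = (\<Sum>t<l. msc (trace (X ** M t)) (\<sigma> t))" and P: "clin Psi"
  shows "tensor_map Xi Psi \<rho> = (\<Sum>t<l. kron (\<sigma> t) (Psi (ptr (M t) \<rho>)))"
proof -
  define F where "F t a a' b b' = msc (M t $a'$a * \<rho>$(a,b)$(a',b')) (kron (\<sigma> t) (Psi (munit b b')))" for t a a' b b'
  have Xm: "Xi (munit a a') = (\<Sum>t<l. msc (M t $a'$a) (\<sigma> t))" for a a'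
    using X by (simp add: trace_munit)
  have "tensor_map Xi Psi \<rho> = (\<Sum>a\<in>UNIV. \<Sum>a'\<in>UNIV. \<Sum>b\<in>UNIV. \<Sum>b'\<in>UNIV. \<Sum>t<l. F t a a' b b')"
    unfolding tensor_map_def F_def Xm
    by (simp only: kron_sum_left kron_msc_left msc_sum_right msc_mult mult.commute)
  also have "\<dots> = (\<Sum>a\<in>UNIV. \<Sum>a'\<in>UNIV. \<Sum>b\<in>UNIV. \<Sum>t<l. \<Sum>b'\<in>UNIV. F t a a' b b')"
    by (rule sum.cong[OF refl], rule sum.cong[OF refl], rule sum.cong[OF refl], rule sum.swap)
  also have "\<dots> = (\<Sum>a\<in>UNIV. \<Sum>a'\<in>UNIV. \<Sum>t<l. \<Sum>b\<in>UNIV. \<Sum>b'\<in>UNIV. F t a a' b b')"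
    by (rule sum.cong[OF refl], rule sum.cong[OF refl], rule sum.swap)
  also have "\<dots> = (\<Sum>a\<in>UNIV. \<Sum>t<l. \<Sum>a'\<in>UNIV. \<Sum>b\<in>UNIV. \<Sum>b'\<in>UNIV. F t a a' b b')"
    by (rule sum.cong[OF refl], rule sum.swap)
  also have "\<dots> = (\<Sum>t<l. \<Sum>a\<in>UNIV. \<Sum>a'\<in>UNIV. \<Sum>b\<in>UNIV. \<Sum>b'\<in>UNIV. F t a a' b b')"
    by (rule sum.swap)
  also have "\<dots> = (\<Sum>t<l. kron (\<sigma> t) (Psi (ptr (M t) \<rho>)))"
  proof (rule sum.cong[OF refl])
    fix t
    have "Psi (ptr (M t) \<rho>) = (\<Sum>a\<in>UNIV. \<Sum>a'\<in>UNIV. msc (M t $a'$a)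
        (\<Sum>b\<in>UNIV. \<Sum>b'\<in>UNIV. msc (\<rho>$(a,b)$(a',b')) (Psi (munit b b'))))"
      unfolding ptr_blk clin_sum[OF P] clin_msc[OF P] clin_expand[OF P, of "blk _ _ \<rho>"]
      by (simp add: blk_def)
    then show "(\<Sum>a\<in>UNIV. \<Sum>a'\<in>UNIV. \<Sum>b\<in>UNIV. \<Sum>b'\<in>UNIV. F t a a' b b') = kron (\<sigma> t) (Psi (ptr (M t) \<rho>))"
      unfolding F_def by (simp only: kron_sum_right kron_msc_right msc_sum_right msc_mult)
  qed
  finally show ?thesis .
qed



lemma norm_sq: "complex_of_real ((norm (u::complex^'n::finite))^2) = (\<Sum>i\<in>UNIV. cnj (u$i) * u$i)"
proof -
  have "(norm u)^2 = (\<Sum>i\<in>UNIV. (cmod (u$i))^2)"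
    unfolding norm_vec_def L2_set_def by (simp add: sum_nonneg)
  then have "complex_of_real ((norm u)^2) = complex_of_real (\<Sum>i\<in>UNIV. (cmod (u$i))^2)" by (simp only:)
  also have "\<dots> = (\<Sum>i\<in>UNIV. complex_of_real ((cmod (u$i))^2))" by (rule of_real_sum)
  also have "\<dots> = (\<Sum>i\<in>UNIV. cnj (u$i) * u$i)"
    by (rule sum.cong[OF refl]) (simp only: complex_norm_square mult.commute)
  finally show ?thesis .
qed

lemma qf_mat1: "qf (mat 1) (u::complex^'n::finite) u = (\<Sum>i\<in>UNIV. cnj (u$i) * u$i)"
proof -
  have eq: "\<And>i j. cnj (u$i) * (mat 1 :: 'n cmat)$i$j * u$j = (if j = i then cnj (u$i) * u$i else 0)"
    by (simp add: mat1_comp)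
  show ?thesis unfolding qf_def by (simp only: eq) simp
qed

lemma mv_scaleR: "(A::('n::finite) cmat) *v (c *\<^sub>R x) = c *\<^sub>R (A *v x)"
  by (simp add: vec_eq_iff matrix_vector_mult_def scaleR_cplx sum_distrib_left mult_ac)

lemma onorm_attained:
  fixes A :: "('n::finite) cmat"
  shows "\<exists>v. norm v = 1 \<and> norm (A *v v) = opnorm A"
proof -
  let ?S = "sphere (0::complex^'n) 1"
  have c: "continuous_on ?S (\<lambda>v. norm (A *v v))"
    by (intro continuous_intros linear_continuous_on matrix_vector_mul_bounded_linear)
  have "?S \<noteq> {}" by simp
  then obtain v where v: "v \<in> ?S" "\<And>y. y \<in> ?S \<Longrightarrow> norm (A *v y) \<le> norm (A *v v)"
    using continuous_attains_sup[OF compact_sphere _ c] by blast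
  have nv: "norm v = 1" using v(1) by simp
  have "opnorm A \<le> norm (A *v v)"
    unfolding opnorm_def
  proof (rule onorm_le)
    fix x :: "complex^'n"
    show "norm (A *v x) \<le> norm (A *v v) * norm x"
    proof (cases "x = 0")
      case True then show ?thesis by simp
    next
      case False
      then have "(1 / norm x) *\<^sub>R x \<in> ?S" by simp
      then have "norm (A *v ((1 / norm x) *\<^sub>R x)) \<le> norm (A *v v)" by (rule v(2))
      then have "norm (A *v x) / norm x \<le> norm (A *v v)" by (simp add: mv_scaleR)
      then show ?thesis using False by (simp add: divide_le_eq mult.commute)
    qed
  qed
  moreover have "norm (A *v v) \<le> opnorm A"
    using onorm[OF matrix_vector_mul_bounded_linear[of A], of v] nv unfolding opnorm_def by simp
  ultimately show ?thesis using nv by (intro exI[of _ v]) simp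
qed

lemma qf_Av: assumes "psd A" shows "qf A v (A *v v) = qf (mat 1) (A *v v) (A *v v)"
proof -
  have "qf A v (A *v v) = (\<Sum>j\<in>UNIV. \<Sum>i\<in>UNIV. cnj (v$i) * A$i$j * (A *v v)$j)"
    unfolding qf_def by (rule sum.swap)
  also have "\<dots> = (\<Sum>j\<in>UNIV. cnj ((A *v v)$j) * (A *v v)$j)"
  proof (rule sum.cong[OF refl])
    fix j
    have "cnj ((A *v v)$j) = (\<Sum>i\<in>UNIV. cnj (v$i) * A$i$j)"
      unfolding matrix_vector_mult_def by (simp add: cnj_herm[OF assms] mult.commute)
    then show "(\<Sum>i\<in>UNIV. cnj (v$i) * A$i$j * (A *v v)$j) = cnj ((A *v v)$j) * (A *v v)$j"
      by (simp add: sum_distrib_right)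
  qed
  finally show ?thesis by (simp add: qf_mat1)
qed

lemma trace_outer: "trace (outer v ** A) = qf A v v"
proof -
  have "trace (outer v ** A) = (\<Sum>i\<in>UNIV. \<Sum>k\<in>UNIV. v$i * cnj (v$k) * A$k$i)"
    unfolding trace_def mmult_comp outer_def by simp
  also have "\<dots> = (\<Sum>k\<in>UNIV. \<Sum>i\<in>UNIV. v$i * cnj (v$k) * A$k$i)" by (rule sum.swap)
  also have "\<dots> = qf A v v" unfolding qf_def by (simp add: mult_ac)
  finally show ?thesis .
qed

lemma trace_outer1: "trace (outer v) = (\<Sum>i\<in>UNIV. cnj (v$i) * v$i)"
  unfolding trace_def outer_def by (simp add: mult.commute)

lemma povm_state:
  fixes M :: "nat \<Rightarrow> ('p::finite) cmat" and \<sigma> :: "nat \<Rightarrow> ('q::finite) cmat"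
  assumes P: "povm l M" and N: "\<forall>t<l. opnorm (M t) = 1"
    and X: "\<forall>X. Xi X = (\<Sum>t<l. msc (trace (X ** M t)) (\<sigma> t))" and t: "t < l"
  shows "\<exists>\<rho>\<in>dens. Xi \<rho> = \<sigma> t"
proof -
  have psdM: "\<And>s. s < l \<Longrightarrow> psd (M s)" and sumM: "(\<Sum>s<l. M s) = mat 1"
    using P unfolding povm_def by auto
  have sumq: "(\<Sum>s<l. qf (M s) u u) = complex_of_real ((norm u)^2)" for u
  proof -
    have "(\<Sum>s<l. qf (M s) u u) = qf (\<Sum>s<l. M s) u u" by (simp only: qf_sum_mat)
    also have "\<dots> = qf (mat 1) u u" using sumM by simp
    also have "\<dots> = complex_of_real ((norm u)^2)" by (simp only: qf_mat1 norm_sq)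
    finally show ?thesis .
  qed
  have reS: "(\<Sum>s<l. Re (qf (M s) u u)) = (norm u)^2" for u
    using arg_cong[OF sumq[of u], of Re] by simp
  have bound: "Re (qf (M t) u u) \<le> (norm u)^2" for u
  proof -
    have "Re (qf (M t) u u) \<le> (\<Sum>s<l. Re (qf (M s) u u))"
      by (rule member_le_sum) (use t psdM psd_qf in auto)
    then show ?thesis using reS by simp
  qed
  obtain v where nv: "norm v = 1" and nMv: "norm (M t *v v) = 1"
    using onorm_attained[of "M t"] N t by auto
  define y where "y = M t *v v"
  have pt: "psd (M t)" using psdM t by simp
  have "qf (M t) v y = 1" unfolding y_def qf_Av[OF pt] qf_mat1 norm_sq[symmetric] nMv by simp
  with CS[OF pt, of v y] have "1 \<le> Re (qf (M t) v v) * Re (qf (M t) y y)" by simp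
  moreover have "Re (qf (M t) y y) \<le> 1" using bound[of y] nMv y_def by simp
  moreover have "Re (qf (M t) v v) \<ge> 0" "Re (qf (M t) y y) \<ge> 0" using pt psd_qf by auto
  ultimately have "Re (qf (M t) v v) \<ge> 1"
    by (metis mult_left_le order_trans)
  moreover have "Re (qf (M t) v v) \<le> 1" using bound[of v] nv by simp
  moreover have "Im (qf (M t) v v) = 0" using pt psd_qf by auto
  ultimately have qt: "qf (M t) v v = 1" by (simp add: complex_eq_iff)
  have qs: "qf (M s) v v = 0" if "s < l" "s \<noteq> t" for s
  proof -
    have "(\<Sum>s<l. Re (qf (M s) v v)) = Re (qf (M t) v v) + (\<Sum>s\<in>{..<l}-{t}. Re (qf (M s) v v))"
      using t by (simp add: sum.remove)
    then have z: "(\<Sum>s\<in>{..<l}-{t}. Re (qf (M s) v v)) = 0" using reS[of v] nv qt by simp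
    have nn: "\<forall>s\<in>{..<l}-{t}. Re (qf (M s) v v) \<ge> 0"
    proof
      fix s assume "s \<in> {..<l}-{t}"
      then have "psd (M s)" using psdM by simp
      then show "Re (qf (M s) v v) \<ge> 0" unfolding psd_qf by blast
    qed
    have "\<forall>s\<in>{..<l}-{t}. Re (qf (M s) v v) = 0"
      using sum_nonneg_eq_0_iff[of "{..<l}-{t}" "\<lambda>s. Re (qf (M s) v v)"] z nn by blast
    then have "Re (qf (M s) v v) = 0" using that by auto
    moreover have "Im (qf (M s) v v) = 0" using psdM[OF that(1)] psd_qf by auto
    ultimately show ?thesis by (simp add: complex_eq_iff)
  qed
  have "Xi (outer v) = (\<Sum>s<l. if s = t then \<sigma> s else 0)"
    unfolding X[rule_format] trace_outer
    by (rule sum.cong[OF refl]) (use qt qs in auto)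
  also have "\<dots> = \<sigma> t" using t by simp
  finally have "Xi (outer v) = \<sigma> t" .
  moreover have "outer v \<in> dens"
    unfolding dens_def using psd_outer trace_outer1[of v] norm_sq[of v] nv by simp
  ultimately show ?thesis by blast
qed



lemma kron_scaleR_right: "kron A (u *\<^sub>R B) = u *\<^sub>R kron A B"
  by (simp flip: msc_of_real add: kron_msc_right)

lemma dens_axis: "outer (axis c 1 :: complex^'n::finite) \<in> dens"
proof -
  have eq: "\<And>i. cnj ((axis c 1 :: complex^'n)$i) * (axis c 1 :: complex^'n)$i = (if i = c then 1 else 0)"
    by (simp add: axis_def)
  have "trace (outer (axis c 1 :: complex^'n)) = 1"
    unfolding trace_outer1 by (simp only: eq) simp
  then show ?thesis unfolding dens_def using psd_outer by simp
qed

theorem theorem8p7: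
  fixes Xi :: "('p::finite) cmat \<Rightarrow> ('q::finite) cmat"
    and Psi :: "('N::finite) cmat \<Rightarrow> ('k::finite) cmat"
    and l :: nat and M :: "nat \<Rightarrow> 'p cmat" and \<sigma> :: "nat \<Rightarrow> 'q cmat"
  assumes "povm l M"
    and "\<forall>t<l. opnorm (M t) = 1"
    and "\<forall>t<l. \<sigma> t \<in> dens"
    and "\<forall>X. Xi X = (\<Sum>t<l. msc (trace (X ** M t)) (\<sigma> t))"
    and "channel Psi"
  shows "tensor_map Xi Psi ` dens = tensor_set (Xi ` dens) (Psi ` dens)"
proof -
  have psdM: "\<And>s. s < l \<Longrightarrow> psd (M s)" and sumM: "(\<Sum>s<l. M s) = mat 1"
    using assms(1) unfolding povm_def by auto
  have cX: "clin Xi" by (rule clin_Xi[OF assms(4)])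
  have cP: "clin Psi" using assms(5) unfolding channel_def by blast
  let ?G = "{kron X Y | X Y. X \<in> Xi ` dens \<and> Y \<in> Psi ` dens}"
  show ?thesis
  proof
    show "tensor_map Xi Psi ` dens \<subseteq> tensor_set (Xi ` dens) (Psi ` dens)"
    proof
      fix Z assume "Z \<in> tensor_map Xi Psi ` dens"
      then obtain \<rho> where \<rho>: "\<rho> \<in> dens" "Z = tensor_map Xi Psi \<rho>" by auto
      have p\<rho>: "psd \<rho>" and t\<rho>: "trace \<rho> = 1" using \<rho>(1) unfolding dens_def by auto
      define \<tau> where "\<tau> t = ptr (M t) \<rho>" for t
      define w where "w t = Re (trace (\<tau> t))" for t
      have p\<tau>: "psd (\<tau> t)" if "t < l" for t unfolding \<tau>_def by (rule psd_ptr[OF psdM[OF that] p\<rho>])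
      have tr\<tau>: "trace (\<tau> t) = complex_of_real (w t)" if "t < l" for t
        using psd_trace_nonneg[OF p\<tau>[OF that]] unfolding w_def by (simp add: complex_eq_iff)
      have w0: "w t \<ge> 0" if "t \<in> {..<l}" for t
        using psd_trace_nonneg[OF p\<tau>] that unfolding w_def by simp
      have "(\<Sum>t<l. trace (\<tau> t)) = 1"
        unfolding \<tau>_def using t\<rho> by (simp flip: trace_sum ptr_sum add: sumM trace_ptr_one)
      then have wsum: "(\<Sum>t<l. w t) = 1"
        unfolding w_def by (metis Re_sum one_complex.sel(1))
      define d0 where "d0 = outer (axis undefined 1 :: complex^'N)"
      have d0: "d0 \<in> dens" unfolding d0_def by (rule dens_axis)
      define \<tau>' where "\<tau>' t = (if w t = 0 then d0 else (1 / w t) *\<^sub>R \<tau> t)" for t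
      have \<tau>'d: "\<tau>' t \<in> dens" if "t < l" for t
      proof (cases "w t = 0")
        case True then show ?thesis using d0 \<tau>'_def by simp
      next
        case False
        then have "w t > 0" using w0 that by force
        then show ?thesis unfolding \<tau>'_def dens_def using False p\<tau>[OF that] tr\<tau>[OF that]
          by (simp add: psd_scaleR trace_scaleR flip: of_real_mult)
      qed
      have P\<tau>: "Psi (\<tau> t) = w t *\<^sub>R Psi (\<tau>' t)" if "t < l" for t
      proof (cases "w t = 0")
        case True
        then have "\<tau> t = 0" using psd_trace0[OF p\<tau>[OF that]] tr\<tau>[OF that] by simp
        then show ?thesis using True clin_zero[OF cP] by simp
      next
        case False
        then have "\<tau> t = w t *\<^sub>R \<tau>' t" unfolding \<tau>'_def by simp
        then show ?thesis by (simp add: clin_scaleR[OF cP])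
      qed
      have Z: "Z = (\<Sum>t<l. w t *\<^sub>R kron (\<sigma> t) (Psi (\<tau>' t)))"
        unfolding \<rho>(2) tensor_map_povm[OF assms(4) cP]
        by (rule sum.cong[OF refl]) (simp add: \<tau>_def[symmetric] P\<tau> kron_scaleR_right)
      have mem: "kron (\<sigma> t) (Psi (\<tau>' t)) \<in> convex hull ?G" if "t \<in> {..<l}" for t
      proof -
        have tl: "t < l" using that by simp
        obtain r where "r \<in> dens" "Xi r = \<sigma> t"
          using povm_state[OF assms(1) assms(2) assms(4) tl] by blast
        moreover have "\<tau>' t \<in> dens" using \<tau>'d[OF tl] .
        ultimately have a: "\<sigma> t \<in> Xi ` dens" and b: "Psi (\<tau>' t) \<in> Psi ` dens"
          by (metis image_eqI)+
        have "kron (\<sigma> t) (Psi (\<tau>' t)) \<in> ?G"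
          using a b by blast
        then show ?thesis by (rule hull_inc)
      qed
      show "Z \<in> tensor_set (Xi ` dens) (Psi ` dens)"
        unfolding tensor_set_def Z
        by (rule convex_sum[OF finite_lessThan convex_convex_hull wsum w0 mem])
    qed
  next
    show "tensor_set (Xi ` dens) (Psi ` dens) \<subseteq> tensor_map Xi Psi ` dens"
      unfolding tensor_set_def
    proof (rule hull_minimal)
      show "convex (tensor_map Xi Psi ` dens)" by (rule convex_image_tm)
      show "?G \<subseteq> tensor_map Xi Psi ` dens"
      proof
        fix Z assume "Z \<in> ?G"
        then obtain r s where "r \<in> dens" "s \<in> dens" "Z = kron (Xi r) (Psi s)" by blast
        then have "Z = tensor_map Xi Psi (kron r s)" "kron r s \<in> dens"
          by (simp_all add: tensor_map_kron[OF cX cP] dens_kron)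
        then show "Z \<in> tensor_map Xi Psi ` dens" by blast
      qed
    qed
  qed
qed

end
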